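(* Let $\mathcal Q=(-1,1)\times(-1,1)\subset\mathbb R^2$ be the standard open square. Then for every $R>0$, $\mu_{\mathcal Q}\big(\mathcal B_{\mathcal Q}(0,R)\big)\le 2\pi R^2$.
   Context: Let $\mathcal C\subset\mathbb R^m$ be a nonempty open bounded convex set. For distinct $p,q\in\mathcal C$, let $a,b$ be the intersection points of the straight line through $p,q$ with $\partial\mathcal C$, labelled so that $p=(1-s)a+sb$ and $q=(1-t)a+tb$ with $0<s<t<1$; the Hilbert metric is $d_{\mathcal C}(p,q)=\frac12\ln\!\big(\frac{1-s}{s}\cdot\frac{t}{1-t}\big)$, and $d_{\mathcal C}(p,p)=0$. The associated Finsler norm at $p\in\mathcal C$ is $F_{\mathcal C}(p,v)=\frac12\big(\frac1{t^-}+\frac1{t^+}\big)$ for $v\neq0$, where $t^\pm>0$ are the unique numbers with $p-t^-v\in\partial\mathcal C$ and $p+t^+v\in\partial\mathcal C$, and $F_{\mathcal C}(p,0)=0$. Let $B_{\mathcal C}(p)=\{v\in\mathbb R^m : F_{\mathcal C}(p,v)<1\}$, let $\mathrm{vol}$ be Lebesgue measure on $\mathbb R^m$ and $\omega_m$ the Lebesgue volume of the Euclidean unit ball (so $\omega_2=\pi$). The Hilbert measure is $\mu_{\mathcal C}(A)=\int_A\frac{\omega_m}{\mathrm{vol}(B_{\mathcal C}(p))}\,d\mathrm{vol}(p)$ for Borel $A\subset\mathcal C$. When $0\in\mathcal C$ and $R>0$, $\mathcal B_{\mathcal C}(0,R)=\{p\in\mathcal C : d_{\mathcal C}(0,p)<R\}$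 denotes the open metric ball. These definitions are applied with $\mathcal C=\mathcal Q$, $m=2$. *)

theory Defs
  imports "HOL-Analysis.Analysis"
begin

definition hilbert_dist :: "'a::euclidean_space set \<Rightarrow> 'a \<Rightarrow> 'a \<Rightarrow> real" where
  "hilbert_dist C p q =
     (if p = q then 0 else
      (THE d. \<exists>a b s t. a \<in> frontier C \<and> b \<in> frontier C \<and> 0 < s \<and> s < t \<and> t < 1 \<and>
         p = (1 - s) *\<^sub>R a + s *\<^sub>R b \<and> q = (1 - t) *\<^sub>R a + t *\<^sub>R b \<and>
         d = (1/2) * ln (((1 - s) / s) * (t / (1 - t)))))"

definition exit_time :: "'a::euclidean_space set \<Rightarrow> 'a \<Rightarrow> 'a \<Rightarrow> real" where
  "exit_time C p v = (THE t. t > 0 \<and> p + t *\<^sub>R v \<in> frontier C)"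

definition hilbert_finsler :: "'a::euclidean_space set \<Rightarrow> 'a \<Rightarrow> 'a \<Rightarrow> real" where
  "hilbert_finsler C p v =
     (if v = 0 then 0
      else (1/2) * (1 / exit_time C p (- v) + 1 / exit_time C p v))"

definition finsler_ball :: "'a::euclidean_space set \<Rightarrow> 'a \<Rightarrow> 'a set" where
  "finsler_ball C p = {v. hilbert_finsler C p v < 1}"

definition hilbert_measure :: "'a::euclidean_space set \<Rightarrow> 'a set \<Rightarrow> ennreal" where
  "hilbert_measure C A =
     (\<integral>\<^sup>+ p \<in> A. ennreal (measure lebesgue (ball (0::'a) 1) / measure lebesgue (finsler_ball C p))
        \<partial>lebesgue)"

definition hilbert_ball :: "'a::euclidean_space set \<Rightarrow> 'a \<Rightarrow> real \<Rightarrow> 'a set" where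
  "hilbert_ball C c R = {p \<in> C. hilbert_dist C c p < R}"

definition square_Q :: "(real \<times> real) set" where
  "square_Q = box (-1, -1) (1, 1)"

end

theory Submission
  imports Defs
begin

lemma Q_iff: "z \<in> square_Q \<longleftrightarrow> \<bar>fst z\<bar> < 1 \<and> \<bar>snd z\<bar> < 1"
  by (cases z) (auto simp: square_Q_def mem_box Basis_prod_def abs_less_iff)

lemma frontier_Q: "z \<in> frontier square_Q \<longleftrightarrow> max \<bar>fst z\<bar> \<bar>snd z\<bar> = 1"
proof -
  have "(0::real\<times>real) \<in> square_Q" by (simp add: Q_iff)
  hence ne: "box (-1, -1) (1, 1) \<noteq> ({}::(real\<times>real) set)" by (auto simp: square_Q_def)
  show ?thesis unfolding square_Q_def frontier_box using ne
    by (cases z) (auto simp: mem_box Basis_prod_def abs_less_iff abs_le_iff max_def split: if_splits)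
qed

lemma convex_abs_bound:
  fixes a b l :: real
  assumes "0 \<le> l" "l < 1" "\<bar>a\<bar> < 1" "\<bar>b\<bar> \<le> 1"
  shows "\<bar>(1 - l) * a + l * b\<bar> < 1"
proof -
  have "\<bar>(1 - l) * a + l * b\<bar> \<le> (1 - l) * \<bar>a\<bar> + l * \<bar>b\<bar>"
  proof -
    have "\<bar>(1 - l) * a + l * b\<bar> \<le> \<bar>(1 - l) * a\<bar> + \<bar>l * b\<bar>" by (rule abs_triangle_ineq)
    also have "\<dots> = (1 - l) * \<bar>a\<bar> + l * \<bar>b\<bar>" using assms by (simp add: abs_mult)
    finally show ?thesis .
  qed
  also have "\<dots> < 1"
  proof -
    have "(1 - l) * \<bar>a\<bar> < (1 - l) * 1" using assms by (intro mult_strict_left_mono) auto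
    moreover have "l * \<bar>b\<bar> \<le> l * 1" using assms by (intro mult_left_mono) auto
    ultimately show ?thesis by simp
  qed
  finally show ?thesis .
qed

lemma exit_unique:
  fixes p v :: "real\<times>real"
  assumes p: "p \<in> square_Q" and v: "v \<noteq> 0"
  shows "\<exists>!t. t > 0 \<and> p + t *\<^sub>R v \<in> frontier square_Q"
proof -
  obtain x y where pxy: "p = (x, y)" by (cases p)
  obtain v1 v2 where vv: "v = (v1, v2)" by (cases v)
  have x: "\<bar>x\<bar> < 1" and y: "\<bar>y\<bar> < 1" using p by (auto simp: Q_iff pxy)
  have vn: "\<bar>v1\<bar> + \<bar>v2\<bar> > 0" using v vv by (cases "v1 = 0") (auto simp: zero_prod_def)
  define f where "f t = max \<bar>x + t * v1\<bar> \<bar>y + t * v2\<bar>" for t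
  have fr: "p + t *\<^sub>R v \<in> frontier square_Q \<longleftrightarrow> f t = 1" for t
    by (simp add: frontier_Q pxy vv f_def)
  define T where "T = 4 / (\<bar>v1\<bar> + \<bar>v2\<bar>)"
  have T: "T > 0" using vn by (simp add: T_def)
  have "T * \<bar>v1\<bar> + T * \<bar>v2\<bar> = T * (\<bar>v1\<bar> + \<bar>v2\<bar>)" by (simp add: algebra_simps)
  also have "\<dots> = 4" using vn unfolding T_def
    by (metis divide_eq_eq less_irrefl)
  finally have "T * \<bar>v1\<bar> + T * \<bar>v2\<bar> = 4" .
  hence "T * \<bar>v1\<bar> \<ge> 2 \<or> T * \<bar>v2\<bar> \<ge> 2" by linarith
  moreover have "\<bar>x + T * v1\<bar> \<ge> T * \<bar>v1\<bar> - 1" "\<bar>y + T * v2\<bar> \<ge> T * \<bar>v2\<bar> - 1"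
    using x y T by (auto simp: abs_mult abs_le_iff abs_less_iff)
  ultimately have fT: "f T \<ge> 1" unfolding f_def by linarith
  have f0: "f 0 \<le> 1" using x y by (simp add: f_def)
  have "continuous_on {0..T} f" unfolding f_def by (intro continuous_intros)
  then obtain t where t: "0 \<le> t" "t \<le> T" "f t = 1"
    using IVT'[of f 0 1 T] f0 fT T by auto
  have "t \<noteq> 0" using t x y by (auto simp: f_def)
  with t have ex: "t > 0 \<and> f t = 1" by auto
  have un: "t1 = t2" if "t1 > 0" "f t1 = 1" "t2 > 0" "f t2 = 1" for t1 t2
  proof (rule ccontr)
    have *: False if "0 < s1" "s1 < s2" "f s1 = 1" "f s2 = 1" for s1 s2
    proof -
      define l where "l = s1 / s2"
      have l: "0 \<le> l" "l < 1" using that by (auto simp: l_def)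
      have e1: "x + s1 * v1 = (1 - l) * x + l * (x + s2 * v1)"
        and e2: "y + s1 * v2 = (1 - l) * y + l * (y + s2 * v2)"
        using that by (auto simp: l_def field_simps)
      have b1: "\<bar>x + s2 * v1\<bar> \<le> 1" and b2: "\<bar>y + s2 * v2\<bar> \<le> 1"
        using that(4) by (auto simp: f_def max_def split: if_splits)
      have "\<bar>x + s1 * v1\<bar> < 1" unfolding e1 by (rule convex_abs_bound[OF l x b1])
      moreover have "\<bar>y + s1 * v2\<bar> < 1" unfolding e2 by (rule convex_abs_bound[OF l y b2])
      ultimately have "f s1 < 1" by (simp add: f_def)
      thus False using that by simp
    qed
    assume "t1 \<noteq> t2"
    hence "t1 < t2 \<or> t2 < t1" by auto
    thus False using * that by blast
  qed
  show ?thesis unfolding fr using ex un by blast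
qed

definition P :: "real \<Rightarrow> real \<Rightarrow> real" where
  "P x w = (if w \<ge> 0 then w / (1 - x) else - w / (1 + x))"

lemma P_nonneg: "\<bar>x\<bar> < 1 \<Longrightarrow> P x w \<ge> 0"
  unfolding P_def by (auto intro: divide_nonneg_pos divide_nonpos_pos simp: abs_less_iff)

lemma P_sum: assumes "\<bar>x\<bar> < 1" shows "P x w + P x (- w) = 2 * (\<bar>w\<bar> / (1 - x\<^sup>2))"
proof -
  have a: "1 - x > 0" "1 + x > 0" using assms by (auto simp: abs_less_iff)
  have e: "1 - x\<^sup>2 = (1 - x) * (1 + x)" by (simp add: power2_eq_square algebra_simps)
  show ?thesis using a unfolding P_def e
    by (cases "w = 0") (auto simp: field_simps)
qed

lemma inv_exit_le:
  fixes x y v1 v2 :: real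
  assumes p: "(x, y) \<in> square_Q" and v: "(v1, v2) \<noteq> 0"
  shows "1 / exit_time square_Q (x, y) (v1, v2) \<le> P x v1 + P y v2"
proof -
  define t where "t = exit_time square_Q (x, y) (v1, v2)"
  have "t > 0 \<and> (x, y) + t *\<^sub>R (v1, v2) \<in> frontier square_Q"
    unfolding t_def exit_time_def by (rule theI'[OF exit_unique[OF p v]])
  hence t: "t > 0" and m: "max \<bar>x + t * v1\<bar> \<bar>y + t * v2\<bar> = 1"
    by (auto simp: frontier_Q)
  have x: "\<bar>x\<bar> < 1" and y: "\<bar>y\<bar> < 1" using p by (auto simp: Q_iff)
  have Px: "P x v1 \<ge> 0" and Py: "P y v2 \<ge> 0" using x y by (auto intro: P_nonneg)
  have key: "1 / t = P z w" if "z + t * w = 1 \<or> z + t * w = -1" "\<bar>z\<bar> < 1" for z w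
  proof -
    have a: "1 - z > 0" "1 + z > 0" using that(2) by (auto simp: abs_less_iff)
    from that(1) show ?thesis
    proof
      assume h: "z + t * w = 1"
      hence w: "w = (1 - z) / t" using t by (auto simp: field_simps)
      hence "w > 0" using a t by simp
      hence "P z w = w / (1 - z)" by (simp add: P_def)
      also have "\<dots> = 1 / t" using w a t by (simp add: field_simps)
      finally show ?thesis by simp
    next
      assume h: "z + t * w = -1"
      hence w: "w = - (1 + z) / t" using t by (auto simp: field_simps)
      hence "w < 0" using a t by (simp add: divide_neg_pos)
      hence "P z w = - w / (1 + z)" by (simp add: P_def)
      also have "\<dots> = 1 / t" using w a t by (simp add: field_simps)
      finally show ?thesis by simp
    qed
  qed
  have "\<bar>x + t * v1\<bar> = 1 \<or> \<bar>y + t * v2\<bar> = 1" using m by (auto simp: max_def split: if_splits)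
  hence "1 / t = P x v1 \<or> 1 / t = P y v2"
    using key[OF _ x] key[OF _ y] by (auto simp: abs_if split: if_splits)
  thus ?thesis unfolding t_def[symmetric] using Px Py by auto
qed

lemma finsler_le:
  fixes x y v1 v2 :: real
  assumes p: "(x, y) \<in> square_Q"
  shows "hilbert_finsler square_Q (x, y) (v1, v2) \<le> \<bar>v1\<bar> / (1 - x\<^sup>2) + \<bar>v2\<bar> / (1 - y\<^sup>2)"
proof (cases "(v1, v2) = 0")
  case True thus ?thesis by (simp add: hilbert_finsler_def zero_prod_def)
next
  case False
  have x: "\<bar>x\<bar> < 1" and y: "\<bar>y\<bar> < 1" using p by (auto simp: Q_iff)
  have F: "(- v1, - v2) \<noteq> 0" using False by (simp add: zero_prod_def)
  have "hilbert_finsler square_Q (x, y) (v1, v2) =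
        (1/2) * (1 / exit_time square_Q (x, y) (- v1, - v2) + 1 / exit_time square_Q (x, y) (v1, v2))"
    using False by (simp add: hilbert_finsler_def)
  also have "\<dots> \<le> (1/2) * ((P x (- v1) + P y (- v2)) + (P x v1 + P y v2))"
    using inv_exit_le[OF p False] inv_exit_le[OF p F] by simp
  also have "\<dots> = (1/2) * ((P x v1 + P x (- v1)) + (P y v2 + P y (- v2)))" by simp
  also have "\<dots> = \<bar>v1\<bar> / (1 - x\<^sup>2) + \<bar>v2\<bar> / (1 - y\<^sup>2)"
    unfolding P_sum[OF x] P_sum[OF y] by (simp add: mult.commute)
  finally show ?thesis .
qed

lemma Nm_scale: "max \<bar>fst (c *\<^sub>R z)\<bar> \<bar>snd (c *\<^sub>R z)\<bar> = \<bar>c\<bar> * max \<bar>fst z\<bar> \<bar>snd z\<bar>"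
  by (simp add: abs_mult max_mult_distrib_left)

lemma hdist:
  fixes p :: "real \<times> real"
  assumes p: "p \<in> square_Q" and p0: "p \<noteq> 0"
  shows "hilbert_dist square_Q 0 p = artanh (max \<bar>fst p\<bar> \<bar>snd p\<bar>)"
proof -
  define \<rho> where "\<rho> = max \<bar>fst p\<bar> \<bar>snd p\<bar>"
  have r1: "\<rho> < 1" using p by (auto simp: Q_iff \<rho>_def)
  have r0: "\<rho> > 0" using p0 by (cases p) (auto simp: \<rho>_def zero_prod_def max_def)
  define D where "D = artanh \<rho>"
  have ex: "\<exists>a b s t. a \<in> frontier square_Q \<and> b \<in> frontier square_Q \<and> 0 < s \<and> s < t \<and> t < 1 \<and>
         0 = (1 - s) *\<^sub>R a + s *\<^sub>R b \<and> p = (1 - t) *\<^sub>R a + t *\<^sub>R b \<and>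
         D = (1/2) * ln (((1 - s) / s) * (t / (1 - t)))"
  proof (intro exI conjI)
    show "- (1/\<rho>) *\<^sub>R p \<in> frontier square_Q" "(1/\<rho>) *\<^sub>R p \<in> frontier square_Q"
      unfolding frontier_Q Nm_scale using r0 by (simp_all add: \<rho>_def[symmetric])
    show "0 < (1/2::real)" "(1/2::real) < (1 + \<rho>)/2" "(1 + \<rho>)/2 < 1" using r0 r1 by auto
    show "0 = (1 - 1/2) *\<^sub>R (- (1/\<rho>) *\<^sub>R p) + (1/2) *\<^sub>R ((1/\<rho>) *\<^sub>R p)"
      by simp
    show "p = (1 - (1 + \<rho>) / 2) *\<^sub>R (- (1/\<rho>) *\<^sub>R p) + ((1 + \<rho>) / 2) *\<^sub>R ((1/\<rho>) *\<^sub>R p)"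
      using r0 by (cases p) (simp add: field_simps)
    have "((1 - 1/2) / (1/2)) * (((1 + \<rho>)/2) / (1 - (1 + \<rho>)/2)) = (1 + \<rho>) / (1 - \<rho>)"
      using r1 by (simp add: field_simps)
    thus "D = (1/2) * ln (((1 - 1/2) / (1/2)) * (((1 + \<rho>)/2) / (1 - (1 + \<rho>)/2)))"
      by (simp only: D_def artanh_def)
  qed
  have un: "d = D" if "a \<in> frontier square_Q" "b \<in> frontier square_Q" "0 < s" "s < t" "t < 1"
         "0 = (1 - s) *\<^sub>R a + s *\<^sub>R b" "p = (1 - t) *\<^sub>R a + t *\<^sub>R b"
         "d = (1/2) * ln (((1 - s) / s) * (t / (1 - t)))" for a b s t d
  proof -
    have ts: "t - s > 0" using that by simp
    have "p = ((1 - t) *\<^sub>R a + t *\<^sub>R b) - ((1 - s) *\<^sub>R a + s *\<^sub>R b)"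
      using that(6,7) by simp
    also have "\<dots> = (t - s) *\<^sub>R (b - a)" by (simp add: algebra_simps)
    finally have "(1 / (t - s)) *\<^sub>R p = b - a" using ts by simp
    hence ba: "b - a = (1 / (t - s)) *\<^sub>R p" by simp
    have "(1 - s) *\<^sub>R a + s *\<^sub>R b = a + s *\<^sub>R (b - a)" by (simp add: algebra_simps)
    with that(6) have "a = - (s *\<^sub>R (b - a))" by (simp add: eq_neg_iff_add_eq_0)
    hence ea: "a = (- (s / (t - s))) *\<^sub>R p" using ba by simp
    have eb: "b = ((1 - s) / (t - s)) *\<^sub>R p"
    proof -
      have "b = a + (b - a)" by simp
      also have "\<dots> = (- (s / (t - s))) *\<^sub>R p + (1 / (t - s)) *\<^sub>R p" using ea ba by simp
      also have "\<dots> = ((- (s / (t - s))) + 1 / (t - s)) *\<^sub>R p" by (simp only: scaleR_left_distrib)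
      also have "(- (s / (t - s))) + 1 / (t - s) = (1 - s) / (t - s)" by (simp add: diff_divide_distrib)
      finally show ?thesis .
    qed
    have "1 = (s / (t - s)) * \<rho>" using that(1) ts that(3) r0 unfolding ea frontier_Q Nm_scale \<rho>_def by simp
    hence A: "s * \<rho> = t - s" using ts by (simp add: field_simps)
    have "1 = ((1 - s) / (t - s)) * \<rho>" using that(1,2,4,5) ts r0 unfolding eb frontier_Q Nm_scale \<rho>_def by simp
    hence B: "(1 - s) * \<rho> = t - s" using ts by (simp add: field_simps)
    have "s * \<rho> = (1 - s) * \<rho>" using A B by simp
    hence s: "s = 1/2" using r0 by simp
    have t: "t = (1 + \<rho>) / 2" using A unfolding s by (simp add: field_simps)
    have "((1 - s) / s) * (t / (1 - t)) = (1 + \<rho>) / (1 - \<rho>)"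
      unfolding s t using r1 by (simp add: field_simps)
    thus ?thesis using that(8) by (simp add: D_def artanh_def)
  qed
  have "hilbert_dist square_Q 0 p = D"
    unfolding hilbert_dist_def if_not_P[OF p0[symmetric]]
    apply (rule the_equality)
    using ex apply blast
    using un by blast
  thus ?thesis by (simp add: D_def \<rho>_def)
qed


lemma tanh_artanh: fixes x :: real assumes "\<bar>x\<bar> < 1" shows "tanh (artanh x) = x"
proof -
  have a: "1 - x > 0" "1 + x > 0" using assms by (auto simp: abs_less_iff)
  have "exp (- 2 * artanh x) = exp (- ln ((1 + x) / (1 - x)))" by (simp add: artanh_def)
  also have "\<dots> = (1 - x) / (1 + x)" using a by (simp add: exp_minus)
  finally have e: "exp (- 2 * artanh x) = (1 - x) / (1 + x)" .
  show ?thesis unfolding tanh_real_altdef e using a by (simp add: field_simps)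
qed

lemma tri_integral:
  fixes a b :: real assumes a: "a > 0" and b: "b > 0"
  shows "((\<lambda>u. 2 * b * (1 - \<bar>u\<bar> / a)) has_integral (2 * a * b)) {-a..a}"
proof -
  define f where "f u = 2 * b * (1 - \<bar>u\<bar> / a)" for u
  define F1 where "F1 u = 2 * b * (u + u\<^sup>2 / (2 * a))" for u
  define F2 where "F2 u = 2 * b * (u - u\<^sup>2 / (2 * a))" for u
  have d1: "(F1 has_vector_derivative f u) (at u within {-a..0})" if "u \<in> {-a..0}" for u
  proof -
    have "(F1 has_real_derivative 2 * b * (1 + 2 * u / (2 * a))) (at u within {-a..0})"
      unfolding F1_def using a by (auto intro!: derivative_eq_intros)
    moreover have "2 * b * (1 + 2 * u / (2 * a)) = f u" using that a by (simp add: f_def)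
    ultimately show ?thesis by (simp add: has_real_derivative_iff_has_vector_derivative)
  qed
  have d2: "(F2 has_vector_derivative f u) (at u within {0..a})" if "u \<in> {0..a}" for u
  proof -
    have "(F2 has_real_derivative 2 * b * (1 - 2 * u / (2 * a))) (at u within {0..a})"
      unfolding F2_def using a by (auto intro!: derivative_eq_intros)
    moreover have "2 * b * (1 - 2 * u / (2 * a)) = f u" using that a by (simp add: f_def)
    ultimately show ?thesis by (simp add: has_real_derivative_iff_has_vector_derivative)
  qed
  have i1: "(f has_integral (F1 0 - F1 (-a))) {-a..0}"
    using a by (intro fundamental_theorem_of_calculus d1) auto
  have i2: "(f has_integral (F2 a - F2 0)) {0..a}"
    using a by (intro fundamental_theorem_of_calculus d2) auto
  have "(f has_integral ((F1 0 - F1 (-a)) + (F2 a - F2 0))) {-a..a}"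
    using a by (intro has_integral_combine[OF _ _ i1 i2]) auto
  moreover have "(F1 0 - F1 (-a)) + (F2 a - F2 0) = 2 * a * b"
    using a by (simp add: F1_def F2_def power2_eq_square field_simps)
  ultimately show ?thesis by (simp add: f_def[abs_def])
qed

lemma diamond_measure:
  fixes a b :: real assumes a: "a > 0" and b: "b > 0"
  shows "emeasure lborel {v :: real \<times> real. \<bar>fst v\<bar> / a + \<bar>snd v\<bar> / b < 1} = ennreal (2 * a * b)"
proof -
  define D where "D = {v :: real \<times> real. \<bar>fst v\<bar> / a + \<bar>snd v\<bar> / b < 1}"
  have "open D" unfolding D_def by (intro open_Collect_less continuous_intros) (use a b in auto)
  hence Dm[measurable]: "D \<in> sets (lborel \<Otimes>\<^sub>M lborel)" unfolding lborel_prod sets_lborel by (rule borel_open)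
  have inner: "(\<integral>\<^sup>+ w. indicator D (u, w) \<partial>lborel) = ennreal (2 * b * (1 - \<bar>u\<bar> / a)) * indicator {-a..a} u" for u
  proof (cases "\<bar>u\<bar> < a")
    case True
    define c where "c = b * (1 - \<bar>u\<bar> / a)"
    have c: "c > 0" using True a b by (simp add: c_def field_simps)
    have m: "(u, w) \<in> D \<longleftrightarrow> \<bar>w\<bar> < c" for w
    proof -
      have "(u, w) \<in> D \<longleftrightarrow> \<bar>w\<bar> / b < 1 - \<bar>u\<bar> / a" by (auto simp: D_def)
      also have "\<dots> \<longleftrightarrow> \<bar>w\<bar> < b * (1 - \<bar>u\<bar> / a)" using b by (simp add: divide_less_eq mult.commute)
      finally show ?thesis by (simp add: c_def)
    qed
    have m2: "(u, w) \<in> D \<longleftrightarrow> w \<in> {-c<..<c}" for w unfolding m by (auto simp: abs_less_iff)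
    have "\<And>w. indicator D (u, w) = (indicator {-c<..<c} w :: ennreal)"
      unfolding indicator_def m2 ..
    hence "(\<integral>\<^sup>+ w. indicator D (u, w) \<partial>lborel) = emeasure lborel {-c<..<c}" by simp
    also have "\<dots> = ennreal (2 * c)" using c by simp
    finally show ?thesis using True by (auto simp: c_def indicator_def abs_less_iff mult.assoc)
  next
    case False
    have "(u, w) \<notin> D" for w
    proof -
      have "\<bar>u\<bar> / a \<ge> 1" using False a by simp
      moreover have "\<bar>w\<bar> / b \<ge> 0" using b by simp
      ultimately show ?thesis by (simp add: D_def)
    qed
    hence l: "\<And>w. indicator D (u, w) = (0 :: ennreal)" by (simp add: indicator_def)
    have "ennreal (2 * b * (1 - \<bar>u\<bar> / a)) * indicator {-a..a} u = 0"
    proof (cases "\<bar>u\<bar> = a")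
      case True thus ?thesis using a by simp
    next
      case F2: False
      hence "u \<notin> {-a..a}" using False by auto
      thus ?thesis by simp
    qed
    thus ?thesis using l by simp
  qed
  have Dl: "D \<in> sets lborel" using Dm unfolding lborel_prod .
  have "emeasure lborel D = (\<integral>\<^sup>+ z. indicator D z \<partial>lborel)" using Dl by simp
  also have "\<dots> = (\<integral>\<^sup>+ z. indicator D z \<partial>(lborel \<Otimes>\<^sub>M lborel))"
    by (simp only: lborel_prod)
  also have "\<dots> = (\<integral>\<^sup>+ u. \<integral>\<^sup>+ w. indicator D (u, w) \<partial>lborel \<partial>lborel)"
    by (rule lborel.nn_integral_fst[symmetric]) measurable
  also have "\<dots> = (\<integral>\<^sup>+ u. ennreal (2 * b * (1 - \<bar>u\<bar> / a)) * indicator {-a..a} u \<partial>lborel)"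
    unfolding inner ..
  also have "\<dots> = ennreal (2 * a * b)"
    using a b tri_integral[OF a b] by (intro nn_integral_has_integral_lebesgue') (auto simp: field_simps)
  finally show ?thesis unfolding D_def .
qed


lemma hball_bound:
  fixes p :: "real \<times> real"
  assumes R: "R > 0" and p: "p \<in> hilbert_ball square_Q 0 R"
  shows "p \<in> square_Q" "\<bar>fst p\<bar> \<le> tanh R" "\<bar>snd p\<bar> \<le> tanh R"
proof -
  show pQ: "p \<in> square_Q" using p by (simp add: hilbert_ball_def)
  have "max \<bar>fst p\<bar> \<bar>snd p\<bar> \<le> tanh R"
  proof (cases "p = 0")
    case True thus ?thesis using R by (simp add: less_imp_le)
  next
    case False
    define \<rho> where "\<rho> = max \<bar>fst p\<bar> \<bar>snd p\<bar>"
    have r1: "\<bar>\<rho>\<bar> < 1" using pQ by (auto simp: Q_iff \<rho>_def)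
    have "artanh \<rho> < R" using p hdist[OF pQ False] by (simp add: hilbert_ball_def \<rho>_def)
    hence t: "tanh (artanh \<rho>) < tanh R" by simp
    have "\<rho> < tanh R" using t unfolding tanh_artanh[OF r1] .
    thus ?thesis by (simp add: \<rho>_def)
  qed
  thus "\<bar>fst p\<bar> \<le> tanh R" "\<bar>snd p\<bar> \<le> tanh R" by auto
qed

lemma integral_1d:
  fixes r :: real assumes r0: "0 \<le> r" and r1: "r < 1"
  shows "(\<integral>\<^sup>+ x. ennreal (1 / (1 - x\<^sup>2)) * indicator {-r..r} x \<partial>lborel) = ennreal (2 * artanh r)"
proof -
  have "((\<lambda>x. 1 / (1 - x\<^sup>2)) has_integral (artanh r - artanh (-r))) {-r..r}"
  proof (rule fundamental_theorem_of_calculus)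
    show "-r \<le> r" using r0 by simp
    fix x assume "x \<in> {-r..r}"
    hence "\<bar>x\<bar> < 1" using r1 by auto
    thus "(artanh has_vector_derivative 1 / (1 - x\<^sup>2)) (at x within {-r..r})"
      unfolding has_real_derivative_iff_has_vector_derivative[symmetric]
      by (rule artanh_real_has_field_derivative)
  qed
  hence "((\<lambda>x. 1 / (1 - x\<^sup>2)) has_integral (2 * artanh r)) {-r..r}"
    using r1 r0 by simp
  moreover have "\<And>x. x \<in> {-r..r} \<Longrightarrow> 0 \<le> 1 / (1 - x\<^sup>2)"
  proof -
    fix x :: real assume "x \<in> {-r..r}"
    hence "\<bar>x\<bar> < 1" using r1 by auto
    hence "x\<^sup>2 < 1" by (simp add: abs_square_less_1)
    thus "0 \<le> 1 / (1 - x\<^sup>2)" by simp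
  qed
  ultimately show ?thesis by (intro nn_integral_has_integral_lebesgue') auto
qed

lemma diamond_sets:
  fixes a b :: real assumes a: "a > 0" and b: "b > 0"
  shows "{v :: real \<times> real. \<bar>fst v\<bar> / a + \<bar>snd v\<bar> / b < 1} \<in> sets lborel"
proof -
  have "open {v :: real \<times> real. \<bar>fst v\<bar> / a + \<bar>snd v\<bar> / b < 1}"
    by (intro open_Collect_less continuous_intros) (use a b in auto)
  thus ?thesis unfolding sets_lborel by (rule borel_open)
qed

lemma density_bound:
  fixes x y :: real
  assumes p: "(x, y) \<in> square_Q"
  shows "measure lebesgue (ball (0::real\<times>real) 1) / measure lebesgue (finsler_ball square_Q (x, y))
         \<le> (pi / 2) * (1 / (1 - x\<^sup>2)) * (1 / (1 - y\<^sup>2))"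
proof -
  have x: "\<bar>x\<bar> < 1" and y: "\<bar>y\<bar> < 1" using p by (auto simp: Q_iff)
  define a where "a = 1 - x\<^sup>2"
  define b where "b = 1 - y\<^sup>2"
  have a: "a > 0" using x by (simp add: a_def abs_square_less_1)
  have b: "b > 0" using y by (simp add: b_def abs_square_less_1)
  have ball: "measure lebesgue (ball (0::real\<times>real) 1) = pi"
    using content_ball[of 1 "0::real\<times>real"] by (simp add: eval_unit_ball_vol)
  define FB where "FB = finsler_ball square_Q (x, y)"
  define D where "D = {v :: real \<times> real. \<bar>fst v\<bar> / a + \<bar>snd v\<bar> / b < 1}"
  have rhs: "(pi / 2) * (1 / (1 - x\<^sup>2)) * (1 / (1 - y\<^sup>2)) = pi / (2 * a * b)"
    by (simp add: a_def b_def)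
  show ?thesis
  proof (cases "measure lebesgue FB = 0")
    case True
    have l: "measure lebesgue (ball (0::real\<times>real) 1) / measure lebesgue (finsler_ball square_Q (x, y)) = 0"
      using True by (simp add: FB_def)
    show ?thesis unfolding l rhs using a b by simp
  next
    case False
    have FBs: "FB \<in> sets lebesgue" using False measure_notin_sets by blast
    have "emeasure lebesgue FB \<noteq> \<infinity>" using False by (auto simp: measure_def)
    hence FBf: "FB \<in> fmeasurable lebesgue" using FBs by (simp add: fmeasurable_def top.not_eq_extremum)
    have DF: "D \<subseteq> FB"
    proof
      fix v assume "v \<in> D"
      obtain v1 v2 where v: "v = (v1, v2)" by (cases v)
      have "hilbert_finsler square_Q (x, y) (v1, v2) \<le> \<bar>v1\<bar> / a + \<bar>v2\<bar> / b"
        using finsler_le[OF p] by (simp add: a_def b_def)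
      also have "\<dots> < 1" using \<open>v \<in> D\<close> by (simp add: D_def v)
      finally show "v \<in> FB" by (simp add: FB_def finsler_ball_def v)
    qed
    have Ds: "D \<in> sets lborel" unfolding D_def by (rule diamond_sets[OF a b])
    have "measure lebesgue D = measure lborel D" using Ds by simp
    also have "\<dots> = 2 * a * b"
      using diamond_measure[OF a b] a b by (intro measure_eq_emeasure_eq_ennreal) (auto simp: D_def)
    finally have mD: "measure lebesgue D = 2 * a * b" .
    have "measure lebesgue D \<le> measure lebesgue FB"
      using DF Ds FBf by (intro measure_mono_fmeasurable) auto
    hence le: "2 * a * b \<le> measure lebesgue FB" using mD by simp
    have "pi / measure lebesgue FB \<le> pi / (2 * a * b)"
    proof -
      have "0 < 2 * a * b" using a b by simp
      hence "0 < measure lebesgue FB" using le by linarith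
      thus ?thesis using le a b by (intro divide_left_mono) (auto intro!: mult_pos_pos)
    qed
    thus ?thesis unfolding rhs ball FB_def[symmetric] .
  qed
qed

theorem mainTheorem7:
  fixes R :: real
  assumes "R > 0"
  shows "hilbert_measure square_Q (hilbert_ball square_Q 0 R) \<le> ennreal (2 * pi * R\<^sup>2)"
proof -
  define r where "r = tanh R"
  have r0: "0 \<le> r" and r1: "r < 1" using assms by (auto simp: r_def tanh_real_lt_1 less_imp_le)
  define A where "A = hilbert_ball square_Q (0::real\<times>real) R"
  define G where "G x = ennreal (1 / (1 - x\<^sup>2)) * indicator {-r..r} x" for x :: real
  have Gm[measurable]: "G \<in> borel_measurable lborel" unfolding G_def[abs_def] by measurable
  define H where "H z = ennreal (pi / 2) * G (fst z) * G (snd z)" for z :: "real \<times> real"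
  have pw: "ennreal (measure lebesgue (ball (0::real\<times>real) 1) / measure lebesgue (finsler_ball square_Q p))
        * indicator A p \<le> H p" for p
  proof (cases "p \<in> A")
    case False thus ?thesis by simp
  next
    case True
    obtain x y where p: "p = (x, y)" by (cases p)
    have pQ: "(x, y) \<in> square_Q" and bx: "\<bar>x\<bar> \<le> r" and "\<bar>y\<bar> \<le> r"
      using hball_bound[OF assms, of p] True by (auto simp: A_def r_def p)
    hence bxy: "x \<in> {-r..r}" "y \<in> {-r..r}" by auto
    have x2: "x\<^sup>2 < 1" "y\<^sup>2 < 1" using pQ by (auto simp: Q_iff abs_square_less_1)
    have g: "0 \<le> 1 / (1 - x\<^sup>2)" "0 \<le> 1 / (1 - y\<^sup>2)" using x2 by auto
    have e1: "ennreal ((pi / 2) * (1 / (1 - x\<^sup>2)) * (1 / (1 - y\<^sup>2)))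
       = ennreal ((pi / 2) * (1 / (1 - x\<^sup>2))) * ennreal (1 / (1 - y\<^sup>2))"
      by (rule ennreal_mult) (use g in auto)
    have e2: "ennreal ((pi / 2) * (1 / (1 - x\<^sup>2))) = ennreal (pi / 2) * ennreal (1 / (1 - x\<^sup>2))"
      by (rule ennreal_mult) (use g in auto)
    have "ennreal (measure lebesgue (ball (0::real\<times>real) 1) / measure lebesgue (finsler_ball square_Q p))
        \<le> ennreal ((pi / 2) * (1 / (1 - x\<^sup>2)) * (1 / (1 - y\<^sup>2)))"
      unfolding p by (intro ennreal_leI density_bound[OF pQ])
    also have "\<dots> = H p"
      unfolding e1 e2 using bxy by (simp add: H_def G_def p)
    finally show ?thesis using True by simp
  qed
  have "hilbert_measure square_Q A \<le> (\<integral>\<^sup>+ p. H p \<partial>lebesgue)"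
    unfolding hilbert_measure_def by (intro nn_integral_mono pw)
  also have "\<dots> = (\<integral>\<^sup>+ p. H p \<partial>lborel)" by (rule nn_integral_completion)
  also have "\<dots> = (\<integral>\<^sup>+ p. H p \<partial>(lborel \<Otimes>\<^sub>M lborel))" by (simp only: lborel_prod)
  also have "\<dots> = (\<integral>\<^sup>+ x. \<integral>\<^sup>+ y. H (x, y) \<partial>lborel \<partial>lborel)"
    by (rule lborel.nn_integral_fst[symmetric]) (unfold H_def, measurable)
  also have "\<dots> = (\<integral>\<^sup>+ x. (ennreal (pi / 2) * G x) * (\<integral>\<^sup>+ y. G y \<partial>lborel) \<partial>lborel)"
    unfolding H_def by (simp add: nn_integral_cmult)
  also have "\<dots> = ennreal (pi / 2) * (\<integral>\<^sup>+ x. G x \<partial>lborel) * (\<integral>\<^sup>+ y. G y \<partial>lborel)"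
    by (simp add: nn_integral_multc nn_integral_cmult)
  also have "(\<integral>\<^sup>+ x. G x \<partial>lborel) = ennreal (2 * R)"
    unfolding G_def using integral_1d[OF r0 r1] by (simp add: r_def artanh_tanh_real)
  also have "ennreal (pi / 2) * ennreal (2 * R) * ennreal (2 * R) = ennreal (2 * pi * R\<^sup>2)"
    using assms by (simp add: ennreal_mult'[symmetric] power2_eq_square)
  finally show ?thesis unfolding A_def .
qed

end
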